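(* Let $\tau=(12)(34)(56)\in S_7$ acting on $D_7$ (variables $1,\dots,7$). Then $$\phi_9\big((12)(34)(56)(78)\big)=\#\{(a,b,d): a,d\in\Phi_7(\tau),\ b\in D_7,\ a\le b,\ b\vee \tau b\le d\},$$ where $\le$ and $\vee$ are the pointwise order and pointwise maximum of functions.
   Context: $B=\{0,1\}$ with $0\le1$; $B^n$ is ordered componentwise; $D_n$ is the set of monotone functions $B^n\to B$, ordered pointwise ($f\le g$ iff $f(x)\le g(x)$ for all $x$). $S_n$ acts on $D_n$ by $(\pi f)(x_1,\dots,x_n)=f(x_{\pi(1)},\dots,x_{\pi(n)})$. For $\pi\in S_n$, $\Phi_n(\pi)=\{f\in D_n:\pi f=f\}$ and $\phi_n(\pi)=|\Phi_n(\pi)|$. Here $(12)(34)(56)(78)\in S_9$ fixes variable $9$. *)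

theory Defs
  imports "HOL-Combinatorics.Combinatorics"
begin

text \<open>Points of B^n are boolean lists of length n (entry i-1 is x_i; False < True).
  A function B^n -> B is a map on bool lists which is False off lists of length n
  (extensional), so that equality and the pointwise order/sup of HOL functions
  agree with those of functions on B^n.\<close>

definition cube :: "nat \<Rightarrow> bool list set" where
  "cube n = {xs. length xs = n}"

definition leq_vec :: "bool list \<Rightarrow> bool list \<Rightarrow> bool" where
  "leq_vec xs ys \<longleftrightarrow> list_all2 (\<le>) xs ys"

definition D :: "nat \<Rightarrow> (bool list \<Rightarrow> bool) set" where
  "D n = {f. (\<forall>xs. xs \<notin> cube n \<longrightarrow> f xs = False) \<and>
             (\<forall>xs\<in>cube n. \<forall>ys\<in>cube n. leq_vec xs ys \<longrightarrow> f xs \<le> f ys)}"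

definition act :: "nat \<Rightarrow> (nat \<Rightarrow> nat) \<Rightarrow> (bool list \<Rightarrow> bool) \<Rightarrow> (bool list \<Rightarrow> bool)" where
  "act n \<pi> f = (\<lambda>xs. if length xs = n
                        then f (map (\<lambda>i. xs ! (\<pi> (Suc i) - 1)) [0..<n])
                        else False)"

definition Phi :: "nat \<Rightarrow> (nat \<Rightarrow> nat) \<Rightarrow> (bool list \<Rightarrow> bool) set" where
  "Phi n \<pi> = {f \<in> D n. act n \<pi> f = f}"

definition phi :: "nat \<Rightarrow> (nat \<Rightarrow> nat) \<Rightarrow> nat" where
  "phi n \<pi> = card (Phi n \<pi>)"

end

theory Submission
  imports Defs
begin
definition "T7 = transpose (1::nat) 2 \<circ> transpose 3 4 \<circ> transpose 5 6"
definition "S9 = transpose (1::nat) 2 \<circ> transpose 3 4 \<circ> transpose 5 6 \<circ> transpose 7 8"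
lemma act7: "act 7 T7 f [x0,x1,x2,x3,x4,x5,x6] = f [x1,x0,x3,x2,x5,x4,x6]"
  by (simp add: act_def T7_def transpose_def upt_rec)
lemma act9: "act 9 S9 f [x0,x1,x2,x3,x4,x5,x6,x7,x8] = f [x1,x0,x3,x2,x5,x4,x7,x6,x8]"
  by (simp add: act_def S9_def transpose_def upt_rec)
lemma len7: "length xs = 7 \<Longrightarrow> \<exists>x0 x1 x2 x3 x4 x5 x6. xs = [x0,x1,x2,x3,x4,x5,x6]"
  by (simp add: length_Suc_conv numeral_eq_Suc) blast
lemma len9: "length xs = 9 \<Longrightarrow> \<exists>x0 x1 x2 x3 x4 x5 x6 x7 x8. xs = [x0,x1,x2,x3,x4,x5,x6,x7,x8]"
  by (simp add: length_Suc_conv numeral_eq_Suc) blast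
lemma D7_out: "a \<in> D 7 \<Longrightarrow> length xs \<noteq> 7 \<Longrightarrow> a xs = False"
  by (simp add: D_def cube_def)
lemma D9_out: "a \<in> D 9 \<Longrightarrow> length xs \<noteq> 9 \<Longrightarrow> a xs = False"
  by (simp add: D_def cube_def)
lemma mono7: "a \<in> D 7 \<Longrightarrow> x0 \<le> y0 \<Longrightarrow> x1 \<le> y1 \<Longrightarrow> x2 \<le> y2 \<Longrightarrow> x3 \<le> y3 \<Longrightarrow> x4 \<le> y4
   \<Longrightarrow> x5 \<le> y5 \<Longrightarrow> x6 \<le> y6 \<Longrightarrow> a [x0,x1,x2,x3,x4,x5,x6] \<Longrightarrow> a [y0,y1,y2,y3,y4,y5,y6]"
  unfolding D_def cube_def leq_vec_def
  by (drule CollectD, elim conjE, drule bspec[of _ _ "[x0,x1,x2,x3,x4,x5,x6]"], simp,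
      drule bspec[of _ _ "[y0,y1,y2,y3,y4,y5,y6]"], auto)
lemma mono9: "a \<in> D 9 \<Longrightarrow> x0 \<le> y0 \<Longrightarrow> x1 \<le> y1 \<Longrightarrow> x2 \<le> y2 \<Longrightarrow> x3 \<le> y3 \<Longrightarrow> x4 \<le> y4
   \<Longrightarrow> x5 \<le> y5 \<Longrightarrow> x6 \<le> y6 \<Longrightarrow> x7 \<le> y7 \<Longrightarrow> x8 \<le> y8
   \<Longrightarrow> a [x0,x1,x2,x3,x4,x5,x6,x7,x8] \<Longrightarrow> a [y0,y1,y2,y3,y4,y5,y6,y7,y8]"
  unfolding D_def cube_def leq_vec_def
  by (drule CollectD, elim conjE, drule bspec[of _ _ "[x0,x1,x2,x3,x4,x5,x6,x7,x8]"], simp,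
      drule bspec[of _ _ "[y0,y1,y2,y3,y4,y5,y6,y7,y8]"], auto)

lemma D7I: assumes "\<And>xs. length xs \<noteq> 7 \<Longrightarrow> a xs = False"
  and "\<And>x0 x1 x2 x3 x4 x5 x6 y0 y1 y2 y3 y4 y5 y6. x0 \<le> y0 \<Longrightarrow> x1 \<le> y1 \<Longrightarrow> x2 \<le> y2 \<Longrightarrow> x3 \<le> y3 \<Longrightarrow> x4 \<le> y4
   \<Longrightarrow> x5 \<le> y5 \<Longrightarrow> x6 \<le> y6 \<Longrightarrow> a [x0,x1,x2,x3,x4,x5,x6] \<Longrightarrow> a [y0,y1,y2,y3,y4,y5,y6]"
  shows "a \<in> D 7"
  unfolding D_def cube_def
proof (intro CollectI conjI allI impI ballI)
  fix xs :: "bool list" assume "xs \<notin> {xs. length xs = 7}" then show "a xs = False" using assms(1) by simp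
next
  fix xs ys :: "bool list" assume "xs \<in> {xs. length xs = 7}" "ys \<in> {xs. length xs = 7}" "leq_vec xs ys"
  then show "a xs \<le> a ys" using assms(2) len7[of xs] len7[of ys] by (auto simp: leq_vec_def)
qed
lemma D9I: assumes "\<And>xs. length xs \<noteq> 9 \<Longrightarrow> a xs = False"
  and "\<And>x0 x1 x2 x3 x4 x5 x6 x7 x8 y0 y1 y2 y3 y4 y5 y6 y7 y8. x0 \<le> y0 \<Longrightarrow> x1 \<le> y1 \<Longrightarrow> x2 \<le> y2 \<Longrightarrow> x3 \<le> y3 \<Longrightarrow> x4 \<le> y4
   \<Longrightarrow> x5 \<le> y5 \<Longrightarrow> x6 \<le> y6 \<Longrightarrow> x7 \<le> y7 \<Longrightarrow> x8 \<le> y8 \<Longrightarrow> a [x0,x1,x2,x3,x4,x5,x6,x7,x8] \<Longrightarrow> a [y0,y1,y2,y3,y4,y5,y6,y7,y8]"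
  shows "a \<in> D 9"
  unfolding D_def cube_def
proof (intro CollectI conjI allI impI ballI)
  fix xs :: "bool list" assume "xs \<notin> {xs. length xs = 9}" then show "a xs = False" using assms(1) by simp
next
  fix xs ys :: "bool list" assume "xs \<in> {xs. length xs = 9}" "ys \<in> {xs. length xs = 9}" "leq_vec xs ys"
  then show "a xs \<le> a ys" using assms(2) len9[of xs] len9[of ys] by (auto simp: leq_vec_def)
qed
lemma act_out: "length xs \<noteq> n \<Longrightarrow> act n p f xs = False" by (simp add: act_def)

lemma ext7: assumes "\<And>xs. length xs \<noteq> 7 \<Longrightarrow> f xs = g xs"
  and "\<And>x0 x1 x2 x3 x4 x5 x6. f [x0,x1,x2,x3,x4,x5,x6] = g [x0,x1,x2,x3,x4,x5,x6]"
  shows "f = g"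
proof
  fix xs show "f xs = g xs" using assms len7[of xs] by (cases "length xs = 7") auto
qed
lemma ext9: assumes "\<And>xs. length xs \<noteq> 9 \<Longrightarrow> f xs = g xs"
  and "\<And>x0 x1 x2 x3 x4 x5 x6 x7 x8. f [x0,x1,x2,x3,x4,x5,x6,x7,x8] = g [x0,x1,x2,x3,x4,x5,x6,x7,x8]"
  shows "f = g"
proof
  fix xs show "f xs = g xs" using assms len9[of xs] by (cases "length xs = 9") auto
qed

lemma actD7: "b \<in> D 7 \<Longrightarrow> act 7 T7 b \<in> D 7"
  apply (rule D7I)
   apply (simp add: act_out)
  apply (simp add: act7)
  apply (erule mono7; simp) done

definition ins :: "bool \<Rightarrow> bool \<Rightarrow> (bool list \<Rightarrow> bool) \<Rightarrow> bool list \<Rightarrow> bool" where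
  "ins p q f = (\<lambda>ys. if length ys = 7 then f (take 6 ys @ p # q # drop 6 ys) else False)"
lemma ins_simp: "ins p q f [x0,x1,x2,x3,x4,x5,x6] = f [x0,x1,x2,x3,x4,x5,p,q,x6]"
  by (simp add: ins_def)
lemma ins_out: "length ys \<noteq> 7 \<Longrightarrow> ins p q f ys = False" by (simp add: ins_def)

definition Fm :: "(bool list \<Rightarrow> bool) \<Rightarrow> (bool list \<Rightarrow> bool) \<times> (bool list \<Rightarrow> bool) \<times> (bool list \<Rightarrow> bool)" where
  "Fm f = (ins False False f, ins False True f, ins True True f)"

definition Gm :: "(bool list \<Rightarrow> bool) \<times> (bool list \<Rightarrow> bool) \<times> (bool list \<Rightarrow> bool) \<Rightarrow> bool list \<Rightarrow> bool" where
  "Gm t = (case t of (a, b, d) \<Rightarrow> (\<lambda>xs. if length xs = 9 then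
      (if xs ! 6 then (if xs ! 7 then d else act 7 T7 b) else (if xs ! 7 then b else a)) (take 6 xs @ drop 8 xs)
      else False))"
lemma Gm_simp: "Gm (a,b,d) [x0,x1,x2,x3,x4,x5,x6,x7,x8] =
   (if x6 then (if x7 then d else act 7 T7 b) else (if x7 then b else a)) [x0,x1,x2,x3,x4,x5,x8]"
  by (simp add: Gm_def)
lemma Gm_out: "length xs \<noteq> 9 \<Longrightarrow> Gm t xs = False" by (simp add: Gm_def split: prod.splits)

lemma chain7: "g [x0,x1,x2,x3,x4,x5,x6] \<Longrightarrow> g \<in> D 7 \<Longrightarrow> g \<le> h \<Longrightarrow> x0 \<le> y0 \<Longrightarrow> x1 \<le> y1 \<Longrightarrow> x2 \<le> y2 \<Longrightarrow> x3 \<le> y3 \<Longrightarrow> x4 \<le> y4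
   \<Longrightarrow> x5 \<le> y5 \<Longrightarrow> x6 \<le> y6 \<Longrightarrow> h [y0,y1,y2,y3,y4,y5,y6]"
  by (drule (8) mono7[where a=g]) (auto simp: le_fun_def)

lemma sig_inv: "f \<in> Phi 9 S9 \<Longrightarrow> f [x1,x0,x3,x2,x5,x4,x7,x6,x8] = f [x0,x1,x2,x3,x4,x5,x6,x7,x8]"
proof -
  assume "f \<in> Phi 9 S9" then have "act 9 S9 f = f" by (simp add: Phi_def)
  then have "act 9 S9 f [x0,x1,x2,x3,x4,x5,x6,x7,x8] = f [x0,x1,x2,x3,x4,x5,x6,x7,x8]" by simp
  then show ?thesis by (simp only: act9)
qed

definition "SS = {(a, b, d). a \<in> Phi 7 T7 \<and> d \<in> Phi 7 T7 \<and> b \<in> D 7 \<and>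
                         a \<le> b \<and> sup b (act 7 T7 b) \<le> d}"

lemma insD: "f \<in> D 9 \<Longrightarrow> ins p q f \<in> D 7"
  apply (rule D7I)
   apply (simp add: ins_out)
  apply (simp add: ins_simp)
  apply (erule mono9; simp) done

lemma F_in: assumes f: "f \<in> Phi 9 S9" shows "Fm f \<in> SS"
proof -
  have fD: "f \<in> D 9" using f by (simp add: Phi_def)
  have inv: "act 7 T7 (ins p p f) = ins p p f" for p
    apply (rule ext7) apply (simp add: act_out ins_out)
    apply (simp only: act7 ins_simp) by (rule sig_inv[OF f])
  have le1: "ins False False f \<le> ins False True f"
  proof (rule le_funI)
    fix ys show "ins False False f ys \<le> ins False True f ys"
    proof (cases "length ys = 7")
      case True from len7[OF True] obtain x0 x1 x2 x3 x4 x5 x6 where ys: "ys = [x0,x1,x2,x3,x4,x5,x6]" by blast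
      show ?thesis unfolding ys ins_simp le_bool_def by (intro impI, rule mono9[OF fD]) simp_all
    qed (simp add: ins_out)
  qed
  have le2: "sup (ins False True f) (act 7 T7 (ins False True f)) \<le> ins True True f"
  proof (rule le_funI)
    fix ys show "sup (ins False True f) (act 7 T7 (ins False True f)) ys \<le> ins True True f ys"
    proof (cases "length ys = 7")
      case True from len7[OF True] obtain x0 x1 x2 x3 x4 x5 x6 where ys: "ys = [x0,x1,x2,x3,x4,x5,x6]" by blast
      have "f [x1,x0,x3,x2,x5,x4,False,True,x6] = f [x0,x1,x2,x3,x4,x5,True,False,x6]"
        by (rule sig_inv[OF f])
      moreover have "f [x0,x1,x2,x3,x4,x5,False,True,x6] \<Longrightarrow> f [x0,x1,x2,x3,x4,x5,True,True,x6]"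
        by (rule mono9[OF fD]) simp_all
      moreover have "f [x0,x1,x2,x3,x4,x5,True,False,x6] \<Longrightarrow> f [x0,x1,x2,x3,x4,x5,True,True,x6]"
        by (rule mono9[OF fD]) simp_all
      ultimately show ?thesis unfolding ys sup_fun_def act7 ins_simp le_bool_def by auto
    qed (simp add: ins_out act_out)
  qed
  show ?thesis unfolding SS_def Fm_def Phi_def using insD[OF fD] inv le1 le2 by auto
qed

lemma G_in: assumes t: "(a,b,d) \<in> SS" shows "Gm (a,b,d) \<in> Phi 9 S9"
proof -
  have aD: "a \<in> D 7" and dD: "d \<in> D 7" and bD: "b \<in> D 7" and ab: "a \<le> b"
    and aT: "act 7 T7 a = a" and dT: "act 7 T7 d = d"
    and bd: "sup b (act 7 T7 b) \<le> d" using t by (auto simp: SS_def Phi_def)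
  have tbD: "act 7 T7 b \<in> D 7" using actD7[OF bD] .
  have atb: "a \<le> act 7 T7 b"
  proof (rule le_funI)
    fix ys have "act 7 T7 a ys \<le> act 7 T7 b ys" using ab by (simp add: act_def le_fun_def)
    then show "a ys \<le> act 7 T7 b ys" using aT by simp
  qed
  have bd1: "b \<le> d" and tbd: "act 7 T7 b \<le> d" using bd by (auto simp: le_fun_def sup_fun_def)
  have ad: "a \<le> d" using ab bd1 by (rule order_trans)
  note c = chain7[OF _ aD order_refl] chain7[OF _ aD ab] chain7[OF _ aD atb] chain7[OF _ aD ad]
     chain7[OF _ bD order_refl] chain7[OF _ bD bd1] chain7[OF _ tbD order_refl] chain7[OF _ tbD tbd]
     chain7[OF _ dD order_refl]
  have GD: "Gm (a,b,d) \<in> D 9"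
    apply (rule D9I)
     apply (simp add: Gm_out)
    apply (simp only: Gm_simp)
    apply (case_tac x6; case_tac x7; case_tac y6; case_tac y7; simp only: if_True if_False; ((erule c; assumption)?))
    apply simp_all
    done
  have GT: "act 9 S9 (Gm (a,b,d)) = Gm (a,b,d)"
  proof (rule ext9)
    fix xs :: "bool list" assume "length xs \<noteq> 9" then show "act 9 S9 (Gm (a,b,d)) xs = Gm (a,b,d) xs"
      by (simp add: act_out Gm_out)
  next
    fix x0 x1 x2 x3 x4 x5 x6 x7 x8
    have A: "a [x1,x0,x3,x2,x5,x4,x8] = a [x0,x1,x2,x3,x4,x5,x8]"
      using fun_cong[OF aT, of "[x0,x1,x2,x3,x4,x5,x8]"] by (simp add: act7)
    have Dd: "d [x1,x0,x3,x2,x5,x4,x8] = d [x0,x1,x2,x3,x4,x5,x8]"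
      using fun_cong[OF dT, of "[x0,x1,x2,x3,x4,x5,x8]"] by (simp add: act7)
    show "act 9 S9 (Gm (a,b,d)) [x0,x1,x2,x3,x4,x5,x6,x7,x8] = Gm (a,b,d) [x0,x1,x2,x3,x4,x5,x6,x7,x8]"
      unfolding act9 Gm_simp using A Dd by (simp add: act7)
  qed
  show ?thesis using GD GT by (simp add: Phi_def)
qed

lemma GF: assumes f: "f \<in> Phi 9 S9" shows "Gm (Fm f) = f"
proof (rule ext9)
  have fD: "f \<in> D 9" using f by (simp add: Phi_def)
  fix xs :: "bool list" assume "length xs \<noteq> 9" then show "Gm (Fm f) xs = f xs"
    by (simp add: Gm_out D9_out[OF fD])
next
  fix x0 x1 x2 x3 x4 x5 x6 x7 x8
  have "f [x1,x0,x3,x2,x5,x4,False,True,x8] = f [x0,x1,x2,x3,x4,x5,True,False,x8]"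
    by (rule sig_inv[OF f])
  then show "Gm (Fm f) [x0,x1,x2,x3,x4,x5,x6,x7,x8] = f [x0,x1,x2,x3,x4,x5,x6,x7,x8]"
    unfolding Fm_def Gm_simp by (cases x6; cases x7; simp add: act7 ins_simp)
qed

lemma FG: assumes t: "(a,b,d) \<in> SS" shows "Fm (Gm (a,b,d)) = (a,b,d)"
proof -
  have aD: "a \<in> D 7" and dD: "d \<in> D 7" and bD: "b \<in> D 7" using t by (auto simp: SS_def Phi_def)
  have "ins p q (Gm (a,b,d)) = (if p then (if q then d else act 7 T7 b) else (if q then b else a))" for p q
    apply (rule ext7)
     apply (simp add: ins_out D7_out[OF aD] D7_out[OF bD] D7_out[OF dD] act_out)
    by (simp add: ins_simp Gm_simp)
  then show ?thesis by (simp add: Fm_def)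
qed

theorem mainTheorem2:
  fixes \<tau> \<sigma> :: "nat \<Rightarrow> nat"
  assumes "\<tau> = transpose 1 2 \<circ> transpose 3 4 \<circ> transpose 5 6"
      and "\<sigma> = transpose 1 2 \<circ> transpose 3 4 \<circ> transpose 5 6 \<circ> transpose 7 8"
  shows "phi 9 \<sigma> = card {(a, b, d). a \<in> Phi 7 \<tau> \<and> d \<in> Phi 7 \<tau> \<and> b \<in> D 7 \<and>
                         a \<le> b \<and> sup b (act 7 \<tau> b) \<le> d}"
proof -
  have t: "\<tau> = T7" and s: "\<sigma> = S9" using assms by (simp_all add: T7_def S9_def)
  have "bij_betw Fm (Phi 9 S9) SS"
    by (rule bij_betw_byWitness[where f'=Gm]) (auto simp: GF FG F_in G_in)
  then have "card (Phi 9 S9) = card SS" by (rule bij_betw_same_card)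
  then show ?thesis unfolding t s phi_def SS_def .
qed

end
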